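(* Let $A\in\mathbb{R}^{m\times n}$ be semi-monotone and let $A=P_1-R_1+S_1=P_2-R_2+S_2$ be two double proper weak regular splittings of $A$. Suppose $A=P_3-R_3+S_3$ is a double proper regular splitting with $N(S_3)\supseteq N(P_3)$, $R(S_3)\subseteq R(P_3)$, and, for $i=1,2$, $1\notin\sigma(S_3P_i^{\dagger})$ and $\widehat{A}_i^{\dagger}\geq 0$, where $\widehat{A}_i=(I-S_3P_i^{\dagger})A$. Let $\widehat{P}_i=P_3$ and $\widehat{R}_i=R_3-S_3P_i^{\dagger}R_i$ for $i=1,2$. If $\widehat{P}_1^{\dagger}\widehat{A}_1\geq\widehat{P}_2^{\dagger}\widehat{A}_2$ and $\widehat{P}_1^{\dagger}\widehat{R}_1\geq\widehat{P}_2^{\dagger}\widehat{R}_2$, then $\rho(W_{13})\leq\rho(W_{23})<1$, where for $i=1,2$ $$W_{i3}=\begin{pmatrix} P_3^{\dagger}R_3-P_3^{\dagger}S_3P_i^{\dagger}R_i & P_3^{\dagger}S_3P_i^{\dagger}S_i\\ I & 0\end{pmatrix}.$$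
   Context: For $M\in\mathbb{R}^{m\times n}$, $M^{\dagger}$ is its Moore–Penrose inverse, $R(M)$, $N(M)$ its range and null space; inequalities are entrywise; $\rho$ is the spectral radius, $\sigma$ the spectrum. $A$ is semi-monotone if $A^{\dagger}\geq0$. A double splitting $A=P-R+S$ is a double proper splitting if $R(P)=R(A)$ and $N(P)=N(A)$; it is double proper regular if moreover $P^{\dagger}\geq0$, $R\geq0$, $S\leq0$; double proper weak regular if moreover $P^{\dagger}\geq 0$, $P^{\dagger}R\geq 0$, $P^{\dagger}S\leq 0$. *)

theory Defs
  imports "Jordan_Normal_Form.Spectral_Radius"
begin

type_synonym rmat = "real mat"

definition is_mp_inverse :: "real mat \<Rightarrow> real mat \<Rightarrow> bool" where
  "is_mp_inverse M X \<longleftrightarrow>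
     X \<in> carrier_mat (dim_col M) (dim_row M) \<and>
     M * X * M = M \<and> X * M * X = X \<and>
     transpose_mat (M * X) = M * X \<and> transpose_mat (X * M) = X * M"

definition range_mat :: "real mat \<Rightarrow> real vec set" where
  "range_mat M = {M *\<^sub>v x | x. x \<in> carrier_vec (dim_col M)}"

definition null_mat :: "real mat \<Rightarrow> real vec set" where
  "null_mat M = {x \<in> carrier_vec (dim_col M). M *\<^sub>v x = 0\<^sub>v (dim_row M)}"

definition mat_le :: "real mat \<Rightarrow> real mat \<Rightarrow> bool" where
  "mat_le M N \<longleftrightarrow> dim_row M = dim_row N \<and> dim_col M = dim_col N \<and>
     (\<forall>i < dim_row M. \<forall>j < dim_col M. M $$ (i,j) \<le> N $$ (i,j))"

definition nonneg_mat :: "real mat \<Rightarrow> bool" where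
  "nonneg_mat M \<longleftrightarrow> (\<forall>i < dim_row M. \<forall>j < dim_col M. M $$ (i,j) \<ge> 0)"

definition nonpos_mat :: "real mat \<Rightarrow> bool" where
  "nonpos_mat M \<longleftrightarrow> (\<forall>i < dim_row M. \<forall>j < dim_col M. M $$ (i,j) \<le> 0)"

definition real_spectrum :: "real mat \<Rightarrow> complex set" where
  "real_spectrum M = spectrum (map_mat complex_of_real M)"

definition real_spectral_radius :: "real mat \<Rightarrow> real" where
  "real_spectral_radius M = spectral_radius (map_mat complex_of_real M)"

definition double_proper_splitting :: "real mat \<Rightarrow> real mat \<Rightarrow> real mat \<Rightarrow> real mat \<Rightarrow> bool" where
  "double_proper_splitting A P R S \<longleftrightarrow>
     P \<in> carrier_mat (dim_row A) (dim_col A) \<and> R \<in> carrier_mat (dim_row A) (dim_col A) \<and>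
     S \<in> carrier_mat (dim_row A) (dim_col A) \<and>
     A = P - R + S \<and> range_mat P = range_mat A \<and> null_mat P = null_mat A"

definition double_proper_regular :: "real mat \<Rightarrow> real mat \<Rightarrow> real mat \<Rightarrow> real mat \<Rightarrow> real mat \<Rightarrow> bool" where
  "double_proper_regular A P R S Pd \<longleftrightarrow> double_proper_splitting A P R S \<and>
     is_mp_inverse P Pd \<and> nonneg_mat Pd \<and> nonneg_mat R \<and> nonpos_mat S"

definition double_proper_weak_regular :: "real mat \<Rightarrow> real mat \<Rightarrow> real mat \<Rightarrow> real mat \<Rightarrow> real mat \<Rightarrow> bool" where
  "double_proper_weak_regular A P R S Pd \<longleftrightarrow> double_proper_splitting A P R S \<and>
     is_mp_inverse P Pd \<and> nonneg_mat Pd \<and> nonneg_mat (Pd * R) \<and> nonpos_mat (Pd * S)"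

definition W_mat :: "nat \<Rightarrow> real mat \<Rightarrow> real mat \<Rightarrow> real mat" where
  "W_mat n B C = four_block_mat B C (1\<^sub>m n) (0\<^sub>m n n)"

end

theory Submission
  imports Defs
begin



lemma mv_sum: "M \<in> carrier_mat a b \<Longrightarrow> v \<in> carrier_vec b \<Longrightarrow> i < a \<Longrightarrow>
  (M *\<^sub>v v) $ i = (\<Sum>j<b. M $$ (i,j) * v $ j)"
  by (auto simp: scalar_prod_def atLeast0LessThan intro!: sum.cong)

lemma mv_mono: assumes "M \<in> carrier_mat a b" "nonneg_mat M" "u \<in> carrier_vec b" "v \<in> carrier_vec b"
  "\<forall>j<b. u $ j \<le> v $ j" "i < a"
  shows "(M *\<^sub>v u) $ i \<le> (M *\<^sub>v v) $ i"
  using assms unfolding mv_sum[OF assms(1,3,6)] mv_sum[OF assms(1,4,6)] nonneg_mat_def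
  by (auto intro!: sum_mono mult_left_mono)

lemma mv_nn: assumes "M \<in> carrier_mat a b" "nonneg_mat M" "v \<in> carrier_vec b"
  "\<forall>j<b. 0 \<le> v $ j" "i < a"
  shows "0 \<le> (M *\<^sub>v v) $ i"
  using assms unfolding mv_sum[OF assms(1,3,5)] nonneg_mat_def
  by (auto intro!: sum_nonneg)

lemma mv_nn_np: assumes "M \<in> carrier_mat a b" "nonneg_mat M" "v \<in> carrier_vec b"
  "\<forall>j<b. v $ j \<le> 0" "i < a"
  shows "(M *\<^sub>v v) $ i \<le> 0"
  using assms unfolding mv_sum[OF assms(1,3,5)] nonneg_mat_def
  by (auto intro!: sum_nonpos simp: mult_nonneg_nonpos)

lemma mv_np_nn: assumes "M \<in> carrier_mat a b" "nonpos_mat M" "v \<in> carrier_vec b"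
  "\<forall>j<b. 0 \<le> v $ j" "i < a"
  shows "(M *\<^sub>v v) $ i \<le> 0"
  using assms unfolding mv_sum[OF assms(1,3,5)] nonpos_mat_def
  by (auto intro!: sum_nonpos simp: mult_nonpos_nonneg)

lemma mv_np_np: assumes "M \<in> carrier_mat a b" "nonpos_mat M" "v \<in> carrier_vec b"
  "\<forall>j<b. v $ j \<le> 0" "i < a"
  shows "0 \<le> (M *\<^sub>v v) $ i"
  using assms unfolding mv_sum[OF assms(1,3,5)] nonpos_mat_def
  by (auto intro!: sum_nonneg simp: mult_nonpos_nonpos)

lemma mat_le_mv: assumes "mat_le M N" "M \<in> carrier_mat a b" "v \<in> carrier_vec b"
  "\<forall>j<b. 0 \<le> v $ j" "i < a"
  shows "(M *\<^sub>v v) $ i \<le> (N *\<^sub>v v) $ i"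
proof -
  have N: "N \<in> carrier_mat a b" using assms(1,2) unfolding mat_le_def by auto
  show ?thesis using assms unfolding mv_sum[OF assms(2,3,5)] mv_sum[OF N assms(3,5)] mat_le_def
    by (auto intro!: sum_mono mult_right_mono)
qed

lemma nonneg_mult: assumes "A \<in> carrier_mat a b" "B \<in> carrier_mat b c" "nonneg_mat A" "nonneg_mat B"
  shows "nonneg_mat (A * B)"
  using assms unfolding nonneg_mat_def
  by (auto simp: scalar_prod_def intro!: sum_nonneg)

lemma mat_eq_mv: fixes M N :: "real mat" assumes "M \<in> carrier_mat a b" "N \<in> carrier_mat a b"
  "\<And>v. v \<in> carrier_vec b \<Longrightarrow> M *\<^sub>v v = N *\<^sub>v v"
  shows "M = N"
proof (rule eq_matI)
  fix i j assume ij: "i < dim_row N" "j < dim_col N"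
  have u: "unit_vec b j \<in> carrier_vec b" by auto
  have "(M *\<^sub>v unit_vec b j) $ i = (N *\<^sub>v unit_vec b j) $ i" using assms(3)[OF u] by simp
  thus "M $$ (i,j) = N $$ (i,j)" using ij assms(1,2)
    by (simp add: scalar_prod_right_unit)
qed (insert assms, auto)

lemma mp_carrier: "is_mp_inverse N Nd \<Longrightarrow> N \<in> carrier_mat a b \<Longrightarrow> Nd \<in> carrier_mat b a"
  unfolding is_mp_inverse_def by auto

lemma mp_NNdN_v: assumes "is_mp_inverse N Nd" "N \<in> carrier_mat a b" "v \<in> carrier_vec b"
  shows "N *\<^sub>v (Nd *\<^sub>v (N *\<^sub>v v)) = N *\<^sub>v v"
proof -
  have Nd: "Nd \<in> carrier_mat b a" using mp_carrier assms by blast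
  have "N * Nd * N = N" using assms(1) unfolding is_mp_inverse_def by auto
  hence "(N * Nd * N) *\<^sub>v v = N *\<^sub>v v" by simp
  moreover have "(N * Nd * N) *\<^sub>v v = (N * Nd) *\<^sub>v (N *\<^sub>v v)"
    using Nd assms(2,3) by (meson assoc_mult_mat_vec mult_carrier_mat)
  moreover have "(N * Nd) *\<^sub>v (N *\<^sub>v v) = N *\<^sub>v (Nd *\<^sub>v (N *\<^sub>v v))"
    using Nd assms(2,3) by (meson assoc_mult_mat_vec mult_mat_vec_carrier)
  ultimately show ?thesis by simp
qed

lemma null_proj: assumes "is_mp_inverse N Nd" "N \<in> carrier_mat a b" "M \<in> carrier_mat c b"
  "null_mat N \<subseteq> null_mat M" "v \<in> carrier_vec b"
  shows "M *\<^sub>v (Nd *\<^sub>v (N *\<^sub>v v)) = M *\<^sub>v v"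
proof -
  have Nd: "Nd \<in> carrier_mat b a" using mp_carrier assms by blast
  define w where "w = v - Nd *\<^sub>v (N *\<^sub>v v)"
  have w: "w \<in> carrier_vec b" using Nd assms unfolding w_def by auto
  have "N *\<^sub>v w = N *\<^sub>v v - N *\<^sub>v (Nd *\<^sub>v (N *\<^sub>v v))" unfolding w_def
    using Nd assms by (auto simp: mult_minus_distrib_mat_vec)
  also have "\<dots> = 0\<^sub>v a" using mp_NNdN_v[OF assms(1,2,5)] assms by auto
  finally have "w \<in> null_mat N" using w assms(2) unfolding null_mat_def by auto
  hence "M *\<^sub>v w = 0\<^sub>v c" using assms(3,4) unfolding null_mat_def by auto
  moreover have "M *\<^sub>v w = M *\<^sub>v v - M *\<^sub>v (Nd *\<^sub>v (N *\<^sub>v v))" unfolding w_def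
    using Nd assms by (auto simp: mult_minus_distrib_mat_vec)
  ultimately have eq: "M *\<^sub>v v - M *\<^sub>v (Nd *\<^sub>v (N *\<^sub>v v)) = 0\<^sub>v c" by simp
  show ?thesis
  proof (rule eq_vecI)
    fix i assume "i < dim_vec (M *\<^sub>v v)"
    hence i: "i < c" using assms by auto
    have "(M *\<^sub>v v - M *\<^sub>v (Nd *\<^sub>v (N *\<^sub>v v))) $ i = 0" using eq i by simp
    thus "(M *\<^sub>v (Nd *\<^sub>v (N *\<^sub>v v))) $ i = (M *\<^sub>v v) $ i" using i assms Nd by simp
  qed (insert assms Nd, auto)
qed

lemma range_proj: assumes "is_mp_inverse N Nd" "N \<in> carrier_mat a b" "M \<in> carrier_mat a c"
  "range_mat M \<subseteq> range_mat N" "v \<in> carrier_vec c"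
  shows "N *\<^sub>v (Nd *\<^sub>v (M *\<^sub>v v)) = M *\<^sub>v v"
proof -
  have "M *\<^sub>v v \<in> range_mat M" using assms unfolding range_mat_def by auto
  then obtain x where x: "x \<in> carrier_vec b" "M *\<^sub>v v = N *\<^sub>v x"
    using assms(2,4) unfolding range_mat_def by auto
  show ?thesis unfolding x(2) by (rule mp_NNdN_v[OF assms(1,2) x(1)])
qed

lemma spec_fix: assumes "1 \<notin> real_spectrum M" "M \<in> carrier_mat a a" "z \<in> carrier_vec a"
  "M *\<^sub>v z = z" shows "z = 0\<^sub>v a"
proof (rule ccontr)
  assume nz: "z \<noteq> 0\<^sub>v a"
  let ?zc = "of_real_hom.vec_hom z :: complex vec"
  let ?Mc = "of_real_hom.mat_hom M :: complex mat"
  have "?Mc *\<^sub>v ?zc = of_real_hom.vec_hom (M *\<^sub>v z)"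
    using of_real_hom.mult_mat_vec_hom[OF assms(2,3)] by (rule sym)
  also have "\<dots> = 1 \<cdot>\<^sub>v ?zc" using assms(4) by simp
  finally have "eigenvector ?Mc ?zc 1" unfolding eigenvector_def using assms(2,3) nz
    by (auto simp: of_real_hom.vec_hom_zero_iff)
  hence "1 \<in> spectrum ?Mc" unfolding spectrum_def eigenvalue_def by auto
  thus False using assms(1) unfolding real_spectrum_def by simp
qed

lemma rsr_nonneg: "W \<in> carrier_mat N N \<Longrightarrow> N > 0 \<Longrightarrow> 0 \<le> real_spectral_radius W"
proof -
  assume a: "W \<in> carrier_mat N N" "N > 0"
  have "map_mat complex_of_real W \<in> carrier_mat N N" using a by auto
  from spectral_radius_mem_max(1)[OF this a(2)] show ?thesis
    unfolding real_spectral_radius_def by auto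
qed

lemma perron_sub: assumes W: "W \<in> carrier_mat N N" and N: "N > 0" and nn: "nonneg_mat W"
  shows "\<exists>u \<in> carrier_vec N. u \<noteq> 0\<^sub>v N \<and> (\<forall>i<N. 0 \<le> u $ i) \<and>
     (\<forall>i<N. real_spectral_radius W * u $ i \<le> (W *\<^sub>v u) $ i)"
proof -
  define Wc where "Wc = map_mat complex_of_real W"
  have Wc: "Wc \<in> carrier_mat N N" using W unfolding Wc_def by auto
  from spectral_radius_mem_max(1)[OF Wc N] obtain k where k: "k \<in> spectrum Wc"
    and rk: "real_spectral_radius W = cmod k" unfolding real_spectral_radius_def Wc_def by auto
  from k obtain v where ev: "eigenvector Wc v k" unfolding spectrum_def eigenvalue_def by auto
  hence v: "v \<in> carrier_vec N" "v \<noteq> 0\<^sub>v N" "Wc *\<^sub>v v = k \<cdot>\<^sub>v v"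
    unfolding eigenvector_def using Wc by auto
  define u where "u = vec N (\<lambda>i. cmod (v $ i))"
  have u: "u \<in> carrier_vec N" unfolding u_def by auto
  have unz: "u \<noteq> 0\<^sub>v N"
  proof
    assume "u = 0\<^sub>v N"
    hence "\<forall>i<N. v $ i = 0" unfolding u_def by (metis index_vec index_zero_vec(1) norm_eq_zero)
    hence "v = 0\<^sub>v N" using v(1) by (intro eq_vecI, auto)
    thus False using v(2) by simp
  qed
  have "\<forall>i<N. real_spectral_radius W * u $ i \<le> (W *\<^sub>v u) $ i"
  proof (intro allI impI)
    fix i assume i: "i < N"
    have "real_spectral_radius W * u $ i = cmod ((Wc *\<^sub>v v) $ i)"
      using i v(1) unfolding rk v(3) u_def by (simp add: norm_mult)
    also have "(Wc *\<^sub>v v) $ i = (\<Sum>j<N. Wc $$ (i,j) * v $ j)" by (rule mv_sum[OF Wc v(1) i])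
    also have "cmod \<dots> \<le> (\<Sum>j<N. cmod (Wc $$ (i,j) * v $ j))" by (rule norm_sum)
    also have "\<dots> = (\<Sum>j<N. W $$ (i,j) * u $ j)"
      using i W nn unfolding Wc_def u_def nonneg_mat_def by (intro sum.cong, auto simp: norm_mult)
    also have "\<dots> = (W *\<^sub>v u) $ i" by (rule mv_sum[OF W u i, symmetric])
    finally show "real_spectral_radius W * u $ i \<le> (W *\<^sub>v u) $ i" .
  qed
  thus ?thesis using u unz unfolding u_def by (intro bexI[of _ u], auto simp: u_def)
qed

lemma nonneg_pow: "W \<in> carrier_mat N N \<Longrightarrow> nonneg_mat W \<Longrightarrow> nonneg_mat (W ^\<^sub>m k)"
proof (induction k)
  case 0 thus ?case unfolding nonneg_mat_def by auto
next
  case (Suc k) thus ?case using nonneg_mult[of "W ^\<^sub>m k" N N W N] by auto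
qed

lemma lower_bound: assumes W: "W \<in> carrier_mat N N" and nn: "nonneg_mat W"
  and z: "z \<in> carrier_vec N" and znn: "\<forall>i<N. 0 \<le> z $ i" and znz: "z \<noteq> 0\<^sub>v N"
  and mu: "\<mu> > 0" and sub: "\<forall>i<N. \<mu> * z $ i \<le> (W *\<^sub>v z) $ i"
  shows "\<mu> \<le> real_spectral_radius W"
proof (rule ccontr)
  assume "\<not> ?thesis"
  hence lt: "real_spectral_radius W < \<mu>" by simp
  have N: "N > 0" using z znz by (cases N, auto)
  define \<rho> where "\<rho> = real_spectral_radius W"
  have r0: "0 \<le> \<rho>" using rsr_nonneg[OF W N] unfolding \<rho>_def .
  define m where "m = (\<rho> + \<mu>) / 2"
  have m: "0 < m" "\<rho> < m" "m < \<mu>" using r0 lt mu unfolding m_def \<rho>_def by auto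
  define Wr where "Wr = (1 / m) \<cdot>\<^sub>m W"
  have Wr: "Wr \<in> carrier_mat N N" using W unfolding Wr_def by auto
  have Wrnn: "nonneg_mat Wr" using nn m unfolding Wr_def nonneg_mat_def by auto
  define M where "M = map_mat complex_of_real Wr"
  have M: "M \<in> carrier_mat N N" using Wr unfolding M_def by auto
  define Wc where "Wc = map_mat complex_of_real W"
  have Wc: "Wc \<in> carrier_mat N N" using W unfolding Wc_def by auto
  have "spectral_radius M < 1"
  proof -
    from spectral_radius_mem_max(1)[OF M N] obtain k where k: "k \<in> spectrum M"
      and rk: "spectral_radius M = cmod k" by auto
    from k obtain v where ev: "eigenvector M v k" unfolding spectrum_def eigenvalue_def by auto
    hence v: "v \<in> carrier_vec N" "v \<noteq> 0\<^sub>v N" "M *\<^sub>v v = k \<cdot>\<^sub>v v"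
      unfolding eigenvector_def using M by auto
    have "Wc *\<^sub>v v = (of_real m * k) \<cdot>\<^sub>v v"
    proof (rule eq_vecI)
      fix i assume "i < dim_vec ((of_real m * k) \<cdot>\<^sub>v v)"
      hence i: "i < N" using v by auto
      have "(Wc *\<^sub>v v) $ i = (\<Sum>j<N. Wc $$ (i,j) * v $ j)" by (rule mv_sum[OF Wc v(1) i])
      also have "\<dots> = of_real m * (\<Sum>j<N. M $$ (i,j) * v $ j)"
        unfolding sum_distrib_left using i W m unfolding Wc_def M_def Wr_def
        by (intro sum.cong, auto)
      also have "(\<Sum>j<N. M $$ (i,j) * v $ j) = (M *\<^sub>v v) $ i" by (rule mv_sum[OF M v(1) i, symmetric])
      finally show "(Wc *\<^sub>v v) $ i = ((of_real m * k) \<cdot>\<^sub>v v) $ i" using v(3) i v(1) by auto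
    qed (insert Wc v, auto)
    hence "eigenvector Wc v (of_real m * k)" using v Wc unfolding eigenvector_def by auto
    hence "cmod (of_real m * k) \<in> cmod ` spectrum Wc" unfolding spectrum_def eigenvalue_def by auto
    from spectral_radius_mem_max(2)[OF Wc N this]
    have "m * cmod k \<le> \<rho>" unfolding \<rho>_def real_spectral_radius_def Wc_def using m by (simp add: norm_mult)
    hence "m * cmod k < m * 1" using m by linarith
    hence "cmod k < 1" using mult_less_cancel_left_pos[OF m(1)] by blast
    thus ?thesis using rk by simp
  qed
  from spectral_radius_jnf_norm_bound_less_1_upper_triangular[OF M this]
  obtain c where c: "\<And>k. norm_bound (M ^\<^sub>m k) c" by auto
  have cb: "\<bar>(Wr ^\<^sub>m k) $$ (i,j)\<bar> \<le> c" if "i < N" "j < N" for i j k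
  proof -
    have "M ^\<^sub>m k = map_mat complex_of_real (Wr ^\<^sub>m k)"
      unfolding M_def using of_real_hom.mat_hom_pow[OF Wr, of k] by (rule sym)
    hence e: "(M ^\<^sub>m k) $$ (i,j) = complex_of_real ((Wr ^\<^sub>m k) $$ (i,j))"
      using that Wr by simp
    have "norm ((M ^\<^sub>m k) $$ (i,j)) \<le> c" using c[of k] that M unfolding norm_bound_def by simp
    thus ?thesis unfolding e by simp
  qed
  define q where "q = \<mu> / m"
  have q: "q > 1" using m unfolding q_def by simp
  have sub': "\<forall>i<N. q * z $ i \<le> (Wr *\<^sub>v z) $ i"
  proof (intro allI impI)
    fix i assume i: "i < N"
    have "(Wr *\<^sub>v z) $ i = (\<Sum>j<N. Wr $$ (i,j) * z $ j)" by (rule mv_sum[OF Wr z i])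
    also have "\<dots> = (1/m) * (\<Sum>j<N. W $$ (i,j) * z $ j)"
      unfolding sum_distrib_left using i W unfolding Wr_def by (intro sum.cong, auto)
    also have "(\<Sum>j<N. W $$ (i,j) * z $ j) = (W *\<^sub>v z) $ i" by (rule mv_sum[OF W z i, symmetric])
    finally have "(Wr *\<^sub>v z) $ i = (1/m) * (W *\<^sub>v z) $ i" .
    thus "q * z $ i \<le> (Wr *\<^sub>v z) $ i" using sub i m unfolding q_def
      by (simp add: divide_right_mono)
  qed
  have grow: "\<forall>i<N. q ^ k * z $ i \<le> (Wr ^\<^sub>m k *\<^sub>v z) $ i" for k
  proof (induction k)
    case 0 thus ?case using Wr z by auto
  next
    case (Suc k)
    have Wk: "Wr ^\<^sub>m k \<in> carrier_mat N N" using Wr by auto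
    have Wknn: "nonneg_mat (Wr ^\<^sub>m k)" by (rule nonneg_pow[OF Wr Wrnn])
    show ?case
    proof (intro allI impI)
      fix i assume i: "i < N"
      have as: "(Wr ^\<^sub>m Suc k *\<^sub>v z) = Wr ^\<^sub>m k *\<^sub>v (Wr *\<^sub>v z)" using assoc_mult_mat_vec[OF Wk Wr z] by simp
      have "q ^ Suc k * z $ i = q * (q ^ k * z $ i)" by simp
      also have "\<dots> \<le> q * (Wr ^\<^sub>m k *\<^sub>v z) $ i" using Suc i q by simp
      also have "\<dots> = (Wr ^\<^sub>m k *\<^sub>v (q \<cdot>\<^sub>v z)) $ i" proof -
        have d: "i < dim_vec (Wr ^\<^sub>m k *\<^sub>v z)" using Wk i by auto
        show ?thesis unfolding mult_mat_vec[OF Wk z] index_smult_vec(1)[OF d] ..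
      qed
      also have "\<dots> \<le> (Wr ^\<^sub>m k *\<^sub>v (Wr *\<^sub>v z)) $ i"
        by (rule mv_mono[OF Wk Wknn _ _ _ i], insert z Wr sub', auto)
      also have "\<dots> = (Wr ^\<^sub>m Suc k *\<^sub>v z) $ i" using as by simp
      finally show "q ^ Suc k * z $ i \<le> (Wr ^\<^sub>m Suc k *\<^sub>v z) $ i" .
    qed
  qed
  obtain i where i: "i < N" "z $ i \<noteq> 0"
    using znz z by (metis carrier_vecD eq_vecI index_zero_vec)
  hence zi: "z $ i > 0" using znn by force
  define S where "S = (\<Sum>j<N. z $ j)"
  have bound: "q ^ k * z $ i \<le> c * S" for k
  proof -
    have "q ^ k * z $ i \<le> (Wr ^\<^sub>m k *\<^sub>v z) $ i" using grow i by auto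
    also have "\<dots> = (\<Sum>j<N. (Wr ^\<^sub>m k) $$ (i,j) * z $ j)" by (rule mv_sum[OF _ z i(1)], insert Wr, auto)
    also have "\<dots> \<le> (\<Sum>j<N. c * z $ j)"
      by (intro sum_mono, insert cb i znn, auto intro!: mult_right_mono simp: abs_le_iff)
    finally show ?thesis unfolding S_def sum_distrib_left .
  qed
  from real_arch_pow[OF q, of "c * S / z $ i"] obtain k where "c * S / z $ i < q ^ k" by auto
  hence "c * S < q ^ k * z $ i" using zi by (simp add: divide_less_eq)
  with bound[of k] show False by simp
qed




lemma as3g: fixes M1 :: "real mat"
  assumes "M1 \<in> carrier_mat a b" "M2 \<in> carrier_mat b c" "M3 \<in> carrier_mat c d" "v \<in> carrier_vec d"
  shows "(M1 * M2 * M3) *\<^sub>v v = M1 *\<^sub>v (M2 *\<^sub>v (M3 *\<^sub>v v))"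
proof -
  have "(M1 * M2 * M3) *\<^sub>v v = (M1 * M2) *\<^sub>v (M3 *\<^sub>v v)"
    by (rule assoc_mult_mat_vec[OF mult_carrier_mat[OF assms(1,2)] assms(3,4)])
  also have "\<dots> = M1 *\<^sub>v (M2 *\<^sub>v (M3 *\<^sub>v v))"
    by (rule assoc_mult_mat_vec[OF assms(1,2) mult_mat_vec_carrier[OF assms(3,4)]])
  finally show ?thesis .
qed

lemma as4g: fixes M1 :: "real mat"
  assumes "M1 \<in> carrier_mat a b" "M2 \<in> carrier_mat b c" "M3 \<in> carrier_mat c d" "M4 \<in> carrier_mat d e"
   "v \<in> carrier_vec e"
  shows "(M1 * M2 * M3 * M4) *\<^sub>v v = M1 *\<^sub>v (M2 *\<^sub>v (M3 *\<^sub>v (M4 *\<^sub>v v)))"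
proof -
  have "(M1 * M2 * M3 * M4) *\<^sub>v v = (M1 * M2 * M3) *\<^sub>v (M4 *\<^sub>v v)"
    by (rule assoc_mult_mat_vec[OF mult_carrier_mat[OF mult_carrier_mat[OF assms(1,2)] assms(3)] assms(4,5)])
  also have "\<dots> = M1 *\<^sub>v (M2 *\<^sub>v (M3 *\<^sub>v (M4 *\<^sub>v v)))"
    by (rule as3g[OF assms(1-3) mult_mat_vec_carrier[OF assms(4,5)]])
  finally show ?thesis .
qed

lemma idx3: fixes u :: "real vec" shows "u \<in> carrier_vec k \<Longrightarrow> v \<in> carrier_vec k \<Longrightarrow> w \<in> carrier_vec k \<Longrightarrow> i < k
  \<Longrightarrow> (u - v + w) $ i = u $ i - v $ i + w $ i"
  by (simp add: carrier_vecD)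

lemma idx2: fixes u :: "real vec" shows "u \<in> carrier_vec k \<Longrightarrow> v \<in> carrier_vec k \<Longrightarrow> i < k
  \<Longrightarrow> (u - v) $ i = u $ i - v $ i"
  by (simp add: carrier_vecD)

lemma idxp: fixes u :: "real vec" shows "u \<in> carrier_vec k \<Longrightarrow> v \<in> carrier_vec k \<Longrightarrow> i < k
  \<Longrightarrow> (u + v) $ i = u $ i + v $ i"
  by (simp add: carrier_vecD)

lemma lin3: fixes M :: "real mat" shows "M \<in> carrier_mat a b \<Longrightarrow> u \<in> carrier_vec b \<Longrightarrow> v \<in> carrier_vec b \<Longrightarrow> w \<in> carrier_vec b
  \<Longrightarrow> M *\<^sub>v (u - v + w) = M *\<^sub>v u - M *\<^sub>v v + M *\<^sub>v w"
  by (subst mult_add_distrib_mat_vec[of _ a b], auto simp: mult_minus_distrib_mat_vec[of M a b])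

lemma lin2: fixes M :: "real mat" shows "M \<in> carrier_mat a b \<Longrightarrow> u \<in> carrier_vec b \<Longrightarrow> v \<in> carrier_vec b
  \<Longrightarrow> M *\<^sub>v (u - v) = M *\<^sub>v u - M *\<^sub>v v"
  by (auto simp: mult_minus_distrib_mat_vec[of M a b])

lemma mat3: fixes P :: "real mat" shows "P \<in> carrier_mat a b \<Longrightarrow> R \<in> carrier_mat a b \<Longrightarrow> S \<in> carrier_mat a b \<Longrightarrow> x \<in> carrier_vec b
  \<Longrightarrow> (P - R + S) *\<^sub>v x = P *\<^sub>v x - R *\<^sub>v x + S *\<^sub>v x"
  by (subst add_mult_distrib_mat_vec[of _ a b], auto simp: minus_mult_distrib_mat_vec[of P a b])

lemma mat2: fixes P :: "real mat" shows "P \<in> carrier_mat a b \<Longrightarrow> R \<in> carrier_mat a b \<Longrightarrow> x \<in> carrier_vec b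
  \<Longrightarrow> (P - R) *\<^sub>v x = P *\<^sub>v x - R *\<^sub>v x"
  by (auto simp: minus_mult_distrib_mat_vec[of P a b])

lemma nonneg_from_vec: fixes M :: "real mat" assumes "M \<in> carrier_mat a b"
  "\<And>v. v \<in> carrier_vec b \<Longrightarrow> \<forall>j<b. 0 \<le> v $ j \<Longrightarrow> \<forall>i<a. 0 \<le> (M *\<^sub>v v) $ i"
  shows "nonneg_mat M"
  unfolding nonneg_mat_def
proof (intro allI impI)
  fix i j assume ij: "i < dim_row M" "j < dim_col M"
  have u: "unit_vec b j \<in> carrier_vec b" by auto
  have "\<forall>k<b. 0 \<le> (unit_vec b j :: real vec) $ k" by (auto simp: unit_vec_def)
  from assms(2)[OF u this] ij assms(1) have "0 \<le> (M *\<^sub>v unit_vec b j) $ i" by auto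
  thus "0 \<le> M $$ (i,j)" using ij assms(1) by (simp add: scalar_prod_right_unit)
qed

lemma W_mult: assumes B: "B \<in> carrier_mat n n" and C: "C \<in> carrier_mat n n" and u: "u \<in> carrier_vec (n+n)"
  shows "W_mat n B C *\<^sub>v u = (B *\<^sub>v vec_first u n + C *\<^sub>v vec_last u n) @\<^sub>v vec_first u n"
proof -
  have "W_mat n B C *\<^sub>v u = W_mat n B C *\<^sub>v (vec_first u n @\<^sub>v vec_last u n)" using u by simp
  also have "\<dots> = (B *\<^sub>v vec_first u n + C *\<^sub>v vec_last u n) @\<^sub>v (1\<^sub>m n *\<^sub>v vec_first u n + 0\<^sub>m n n *\<^sub>v vec_last u n)"
    unfolding W_mat_def by (rule four_block_mat_mult_vec[OF B C], auto)
  also have "1\<^sub>m n *\<^sub>v vec_first u n + 0\<^sub>m n n *\<^sub>v vec_last u n = vec_first u n" by auto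
  finally show ?thesis .
qed

lemma W_carrier: "B \<in> carrier_mat n n \<Longrightarrow> C \<in> carrier_mat n n \<Longrightarrow> W_mat n B C \<in> carrier_mat (n+n) (n+n)"
  unfolding W_mat_def by (rule four_block_carrier_mat, auto)

lemma W_nonneg: assumes "B \<in> carrier_mat n n" "C \<in> carrier_mat n n" "nonneg_mat B" "nonneg_mat C"
  shows "nonneg_mat (W_mat n B C)"
  using assms unfolding nonneg_mat_def W_mat_def
  by (auto simp: one_mat_def)

lemma W_perron: assumes B: "B \<in> carrier_mat n n" and C: "C \<in> carrier_mat n n"
  and Bn: "nonneg_mat B" and Cn: "nonneg_mat C" and n: "n > 0"
  shows "\<exists>x y. x \<in> carrier_vec n \<and> y \<in> carrier_vec n \<and> (\<forall>i<n. 0 \<le> x $ i) \<and> (\<forall>i<n. 0 \<le> y $ i)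
    \<and> (x \<noteq> 0\<^sub>v n \<or> y \<noteq> 0\<^sub>v n)
    \<and> (\<forall>i<n. real_spectral_radius (W_mat n B C) * x $ i \<le> (B *\<^sub>v x + C *\<^sub>v y) $ i)
    \<and> (\<forall>i<n. real_spectral_radius (W_mat n B C) * y $ i \<le> x $ i)"
proof -
  let ?W = "W_mat n B C"
  let ?r = "real_spectral_radius ?W"
  have W: "?W \<in> carrier_mat (n+n) (n+n)" by (rule W_carrier[OF B C])
  from perron_sub[OF W _ W_nonneg[OF B C Bn Cn]] n obtain u where u: "u \<in> carrier_vec (n+n)"
    "u \<noteq> 0\<^sub>v (n+n)" "\<forall>i<n+n. 0 \<le> u $ i" "\<forall>i<n+n. ?r * u $ i \<le> (?W *\<^sub>v u) $ i" by auto
  define x where "x = vec_first u n"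
  define y where "y = vec_last u n"
  have xy: "x \<in> carrier_vec n" "y \<in> carrier_vec n" unfolding x_def y_def by auto
  have xi: "x $ i = u $ i" if "i < n" for i using that unfolding x_def vec_first_def by auto
  have yi: "y $ i = u $ (n + i)" if "i < n" for i using that u(1) unfolding y_def vec_last_def by auto
  have Wu: "?W *\<^sub>v u = (B *\<^sub>v x + C *\<^sub>v y) @\<^sub>v x" unfolding x_def y_def by (rule W_mult[OF B C u(1)])
  have BC: "B *\<^sub>v x + C *\<^sub>v y \<in> carrier_vec n" using B C xy by auto
  have dBC: "dim_vec (B *\<^sub>v x + C *\<^sub>v y) = n" using BC C by auto
  have dx: "dim_vec x = n" using xy by auto
  have 1: "\<forall>i<n. ?r * x $ i \<le> (B *\<^sub>v x + C *\<^sub>v y) $ i"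
  proof (intro allI impI)
    fix i assume i: "i < n"
    have "(?W *\<^sub>v u) $ i = (B *\<^sub>v x + C *\<^sub>v y) $ i" unfolding Wu using i C by (simp add: dBC dx)
    moreover have "i < n + n" using i by simp
    ultimately show "?r * x $ i \<le> (B *\<^sub>v x + C *\<^sub>v y) $ i" using u(4) xi[OF i] by metis
  qed
  have 2: "\<forall>i<n. ?r * y $ i \<le> x $ i"
  proof (intro allI impI)
    fix i assume i: "i < n"
    have "(?W *\<^sub>v u) $ (n + i) = x $ i" unfolding Wu using i C by (simp add: dBC dx)
    moreover have "n + i < n + n" using i by simp
    ultimately show "?r * y $ i \<le> x $ i" using u(4) yi[OF i] by metis
  qed
  have 3: "x \<noteq> 0\<^sub>v n \<or> y \<noteq> 0\<^sub>v n"
  proof (rule ccontr)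
    assume "\<not> ?thesis"
    hence "u = 0\<^sub>v n @\<^sub>v 0\<^sub>v n" using vec_first_last_append[OF u(1)] unfolding x_def y_def by auto
    thus False using u(2) by auto
  qed
  show ?thesis using xy 1 2 3 u(3) xi yi by (intro exI[of _ x] exI[of _ y], auto)
qed

lemma W_mult2: assumes B: "B \<in> carrier_mat n n" and C: "C \<in> carrier_mat n n"
  and x: "x \<in> carrier_vec n" and y: "y \<in> carrier_vec n"
  shows "W_mat n B C *\<^sub>v (x @\<^sub>v y) = (B *\<^sub>v x + C *\<^sub>v y) @\<^sub>v x"
proof -
  have "W_mat n B C *\<^sub>v (x @\<^sub>v y) = (B *\<^sub>v x + C *\<^sub>v y) @\<^sub>v (1\<^sub>m n *\<^sub>v x + 0\<^sub>m n n *\<^sub>v y)"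
    unfolding W_mat_def by (rule four_block_mat_mult_vec[OF B C _ _ x y], auto)
  also have "1\<^sub>m n *\<^sub>v x + 0\<^sub>m n n *\<^sub>v y = x" using x y by auto
  finally show ?thesis .
qed

lemma arith_cmp: fixes r X b1 b2 c1 c2 :: real
  assumes "0 < r" "r \<le> 1" "b2 \<le> b1" "b1 + c1 \<le> b2 + c2" "r * X \<le> b1 + c1 / r"
  shows "r * X \<le> b2 + c2 / r"
proof -
  have "(b1 + c1 - b2) / r \<le> c2 / r" using assms by (intro divide_right_mono, auto)
  moreover have "(b1 - b2) \<le> (b1 - b2) / r" using assms
    by (simp add: le_divide_eq mult_left_le)
  moreover have "(b1 + c1 - b2) / r = (b1 - b2) / r + c1 / r" by (simp add: diff_divide_distrib add_divide_distrib)
  ultimately show ?thesis using assms(5) by linarith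
qed




locale splitctx =
  fixes m n :: nat and A P R S Pd P3 R3 S3 Q Ahd :: "real mat"
  assumes A: "A \<in> carrier_mat m n"
  and spl: "double_proper_weak_regular A P R S Pd"
  and spl3: "double_proper_regular A P3 R3 S3 Q"
  and nullS3: "null_mat P3 \<subseteq> null_mat S3"
  and rangeS3: "range_mat S3 \<subseteq> range_mat P3"
  and spec: "1 \<notin> real_spectrum (S3 * Pd)"
  and Ahmp: "is_mp_inverse ((1\<^sub>m m - S3 * Pd) * A) Ahd"
  and Ahnn: "nonneg_mat Ahd"
begin

lemma car: "P \<in> carrier_mat m n" "R \<in> carrier_mat m n" "S \<in> carrier_mat m n"
  "P3 \<in> carrier_mat m n" "R3 \<in> carrier_mat m n" "S3 \<in> carrier_mat m n"
  "Pd \<in> carrier_mat n m" "Q \<in> carrier_mat n m" "Ahd \<in> carrier_mat n m"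
  "(1\<^sub>m m - S3 * Pd) * A \<in> carrier_mat m n"
proof -
  show 1: "P \<in> carrier_mat m n" "R \<in> carrier_mat m n" "S \<in> carrier_mat m n"
    "P3 \<in> carrier_mat m n" "R3 \<in> carrier_mat m n" "S3 \<in> carrier_mat m n"
    using spl spl3 A unfolding double_proper_weak_regular_def double_proper_regular_def
      double_proper_splitting_def by auto
  show "Pd \<in> carrier_mat n m" using mp_carrier[OF _ 1(1)] spl
    unfolding double_proper_weak_regular_def by auto
  show "Q \<in> carrier_mat n m" using mp_carrier[OF _ 1(4)] spl3
    unfolding double_proper_regular_def by auto
  show Ah: "(1\<^sub>m m - S3 * Pd) * A \<in> carrier_mat m n" using A 1 by auto
  show "Ahd \<in> carrier_mat n m" using mp_carrier[OF Ahmp Ah] .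
qed

lemma props: "A = P - R + S" "range_mat P = range_mat A" "null_mat P = null_mat A"
  "is_mp_inverse P Pd" "nonneg_mat Pd" "nonneg_mat (Pd * R)" "nonpos_mat (Pd * S)"
  "A = P3 - R3 + S3" "range_mat P3 = range_mat A" "null_mat P3 = null_mat A"
  "is_mp_inverse P3 Q" "nonneg_mat Q" "nonneg_mat R3" "nonpos_mat S3"
  using spl spl3 unfolding double_proper_weak_regular_def double_proper_regular_def
      double_proper_splitting_def by auto

lemma PQA: "v \<in> carrier_vec n \<Longrightarrow> P3 *\<^sub>v (Q *\<^sub>v (A *\<^sub>v v)) = A *\<^sub>v v"
  by (rule range_proj[OF props(11) car(4) A], insert props(9), auto)

lemma PQS3: "v \<in> carrier_vec n \<Longrightarrow> P3 *\<^sub>v (Q *\<^sub>v (S3 *\<^sub>v v)) = S3 *\<^sub>v v"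
  by (rule range_proj[OF props(11) car(4) car(6) rangeS3])

lemma PQP: "v \<in> carrier_vec n \<Longrightarrow> P3 *\<^sub>v (Q *\<^sub>v (P3 *\<^sub>v v)) = P3 *\<^sub>v v"
  by (rule mp_NNdN_v[OF props(11) car(4)])

lemma R3eq: "R3 = P3 - A + S3"
proof -
  have "R3 $$ (i,j) = (P3 - A + S3) $$ (i,j)" if "i < m" "j < n" for i j
  proof -
    have "A $$ (i,j) = (P3 - R3 + S3) $$ (i,j)" using props(8) by simp
    thus ?thesis using that car A by simp
  qed
  thus ?thesis using car A by (intro eq_matI, auto)
qed

lemma PQR3: assumes v: "v \<in> carrier_vec n" shows "P3 *\<^sub>v (Q *\<^sub>v (R3 *\<^sub>v v)) = R3 *\<^sub>v v"
proof -
  have "R3 *\<^sub>v v = P3 *\<^sub>v v - A *\<^sub>v v + S3 *\<^sub>v v" unfolding R3eq by (rule mat3[OF car(4) A car(6) v])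
  moreover have "P3 *\<^sub>v (Q *\<^sub>v (P3 *\<^sub>v v - A *\<^sub>v v + S3 *\<^sub>v v)) = P3 *\<^sub>v v - A *\<^sub>v v + S3 *\<^sub>v v"
    using car A v by (simp add: lin3[OF car(8)] lin3[OF car(4)] PQA PQS3 PQP)
  ultimately show ?thesis by simp
qed

lemma S3PdP: "v \<in> carrier_vec n \<Longrightarrow> S3 *\<^sub>v (Pd *\<^sub>v (P *\<^sub>v v)) = S3 *\<^sub>v v"
  by (rule null_proj[OF props(4) car(1) car(6)], insert nullS3 props(3,10), auto)


abbreviation "Ah \<equiv> (1\<^sub>m m - S3 * Pd) * A"
abbreviation "G \<equiv> R3 - S3 * Pd * R + S3 * Pd * S"
abbreviation "B \<equiv> Q * R3 - Q * S3 * Pd * R"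
abbreviation "C \<equiv> Q * S3 * Pd * S"

lemma car2: "G \<in> carrier_mat m n" "B \<in> carrier_mat n n" "C \<in> carrier_mat n n"
  "S3 * Pd * R \<in> carrier_mat m n" "S3 * Pd * S \<in> carrier_mat m n" "S3 * Pd \<in> carrier_mat m m"
  "Q * S3 * Pd * R \<in> carrier_mat n n" "Q * R3 \<in> carrier_mat n n"
  using car by auto

lemma as3: assumes "M1 \<in> carrier_mat a n" "v \<in> carrier_vec n" "X \<in> carrier_mat m n" shows
   "(M1 * Pd * X) *\<^sub>v v = M1 *\<^sub>v (Pd *\<^sub>v (X *\<^sub>v v))"
  by (rule as3g[OF assms(1) car(7) assms(3,2)])

lemma Gv: "v \<in> carrier_vec n \<Longrightarrow> G *\<^sub>v v = R3 *\<^sub>v v - S3 *\<^sub>v (Pd *\<^sub>v (R *\<^sub>v v)) + S3 *\<^sub>v (Pd *\<^sub>v (S *\<^sub>v v))"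
  by (subst mat3[OF car(5) car2(4) car2(5)], auto simp: as3[OF car(6)] car)

lemma Bv: "v \<in> carrier_vec n \<Longrightarrow> B *\<^sub>v v = Q *\<^sub>v (R3 *\<^sub>v v) - Q *\<^sub>v (S3 *\<^sub>v (Pd *\<^sub>v (R *\<^sub>v v)))"
proof -
  assume v: "v \<in> carrier_vec n"
  have "(Q * S3 * Pd * R) *\<^sub>v v = Q *\<^sub>v (S3 *\<^sub>v (Pd *\<^sub>v (R *\<^sub>v v)))"
    by (rule as4g[OF car(8) car(6) car(7) car(2) v])
  thus ?thesis using mat2[OF car2(8) car2(7) v] car v by auto
qed

lemma Cv: "v \<in> carrier_vec n \<Longrightarrow> C *\<^sub>v v = Q *\<^sub>v (S3 *\<^sub>v (Pd *\<^sub>v (S *\<^sub>v v)))"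
proof -
  assume v: "v \<in> carrier_vec n"
  show ?thesis by (rule as4g[OF car(8) car(6) car(7) car(3) v])
qed


lemma Ahv: assumes v: "v \<in> carrier_vec n" shows "Ah *\<^sub>v v = P3 *\<^sub>v v - G *\<^sub>v v"
proof -
  have I: "1\<^sub>m m - S3 * Pd \<in> carrier_mat m m" using car by auto
  have Av: "A *\<^sub>v v \<in> carrier_vec m" using A v by auto
  have e1: "Ah *\<^sub>v v = A *\<^sub>v v - S3 *\<^sub>v (Pd *\<^sub>v (A *\<^sub>v v))"
    using assoc_mult_mat_vec[OF I A v] mat2[OF _ car2(6) Av, of "1\<^sub>m m"]
      assoc_mult_mat_vec[OF car(6) car(7) Av] Av by auto
  have e2: "A *\<^sub>v v = P *\<^sub>v v - R *\<^sub>v v + S *\<^sub>v v"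
    by (subst props(1), rule mat3[OF car(1-3) v])
  have e3: "A *\<^sub>v v = P3 *\<^sub>v v - R3 *\<^sub>v v + S3 *\<^sub>v v"
    by (subst props(8), rule mat3[OF car(4-6) v])
  have e4: "S3 *\<^sub>v (Pd *\<^sub>v (A *\<^sub>v v)) = S3 *\<^sub>v v - S3 *\<^sub>v (Pd *\<^sub>v (R *\<^sub>v v)) + S3 *\<^sub>v (Pd *\<^sub>v (S *\<^sub>v v))"
    unfolding e2 using car v by (simp add: lin3[OF car(7)] lin3[OF car(6)] S3PdP)
  show ?thesis
  proof (rule eq_vecI)
    fix i assume "i < dim_vec (P3 *\<^sub>v v - G *\<^sub>v v)"
    hence i: "i < m" using car by auto
    have "(Ah *\<^sub>v v) $ i = (A *\<^sub>v v) $ i - (S3 *\<^sub>v (Pd *\<^sub>v (A *\<^sub>v v))) $ i" unfolding e1 using i car by simp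
    also have "\<dots> = (P3 *\<^sub>v v) $ i - (R3 *\<^sub>v v) $ i + (S3 *\<^sub>v (Pd *\<^sub>v (R *\<^sub>v v))) $ i - (S3 *\<^sub>v (Pd *\<^sub>v (S *\<^sub>v v))) $ i"
      unfolding e4 using arg_cong[OF e3, of "\<lambda>x. x $ i"] i car by simp
    also have "\<dots> = (P3 *\<^sub>v v - G *\<^sub>v v) $ i" unfolding Gv[OF v] using i car by simp
    finally show "(Ah *\<^sub>v v) $ i = (P3 *\<^sub>v v - G *\<^sub>v v) $ i" .
  qed (insert car, auto)
qed

lemma PQG: assumes v: "v \<in> carrier_vec n" shows "P3 *\<^sub>v (Q *\<^sub>v (G *\<^sub>v v)) = G *\<^sub>v v"
proof -
  have w: "Pd *\<^sub>v (R *\<^sub>v v) \<in> carrier_vec n" "Pd *\<^sub>v (S *\<^sub>v v) \<in> carrier_vec n" using car v by auto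
  show ?thesis unfolding Gv[OF v] using car v w
    by (simp add: lin3[OF car(8)] lin3[OF car(4)] PQR3 PQS3)
qed

lemma BCv: assumes v: "v \<in> carrier_vec n" shows "B *\<^sub>v v + C *\<^sub>v v = Q *\<^sub>v (G *\<^sub>v v)"
proof -
  have w: "Pd *\<^sub>v (R *\<^sub>v v) \<in> carrier_vec n" "Pd *\<^sub>v (S *\<^sub>v v) \<in> carrier_vec n" using car v by auto
  show ?thesis unfolding Gv[OF v] Bv[OF v] Cv[OF v] using car v w
    by (simp add: lin3[OF car(8)])
qed


lemma signs: assumes v: "v \<in> carrier_vec n" and nn: "\<forall>j<n. 0 \<le> v $ j"
  shows "\<forall>i<m. 0 \<le> (G *\<^sub>v v) $ i" "\<forall>i<n. 0 \<le> (B *\<^sub>v v) $ i" "\<forall>i<n. 0 \<le> (C *\<^sub>v v) $ i"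
proof -
  have PR: "Pd * R \<in> carrier_mat n n" "Pd * S \<in> carrier_mat n n" using car by auto
  have Rv: "R *\<^sub>v v \<in> carrier_vec m" "S *\<^sub>v v \<in> carrier_vec m" "R3 *\<^sub>v v \<in> carrier_vec m"
    using car v by auto
  have w: "Pd *\<^sub>v (R *\<^sub>v v) \<in> carrier_vec n" "Pd *\<^sub>v (S *\<^sub>v v) \<in> carrier_vec n"
    using car(7) Rv by auto
  have w2: "S3 *\<^sub>v (Pd *\<^sub>v (R *\<^sub>v v)) \<in> carrier_vec m" "S3 *\<^sub>v (Pd *\<^sub>v (S *\<^sub>v v)) \<in> carrier_vec m"
    using car(6) w by auto
  have a1: "\<forall>j<n. 0 \<le> (Pd *\<^sub>v (R *\<^sub>v v)) $ j"
    using mv_nn[OF PR(1) props(6) v nn] unfolding assoc_mult_mat_vec[OF car(7) car(2) v] by blast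
  have a2: "\<forall>j<n. (Pd *\<^sub>v (S *\<^sub>v v)) $ j \<le> 0"
    using mv_np_nn[OF PR(2) props(7) v nn] unfolding assoc_mult_mat_vec[OF car(7) car(3) v] by blast
  have b1: "\<forall>i<m. (S3 *\<^sub>v (Pd *\<^sub>v (R *\<^sub>v v))) $ i \<le> 0"
    using mv_np_nn[OF car(6) props(14) w(1) a1] by blast
  have b2: "\<forall>i<m. 0 \<le> (S3 *\<^sub>v (Pd *\<^sub>v (S *\<^sub>v v))) $ i"
    using mv_np_np[OF car(6) props(14) w(2) a2] by blast
  have b3: "\<forall>i<m. 0 \<le> (R3 *\<^sub>v v) $ i"
    using mv_nn[OF car(5) props(13) v nn] by blast
  show "\<forall>i<m. 0 \<le> (G *\<^sub>v v) $ i" unfolding Gv[OF v]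
  proof (intro allI impI)
    fix i assume i: "i < m"
    have "(R3 *\<^sub>v v - S3 *\<^sub>v (Pd *\<^sub>v (R *\<^sub>v v)) + S3 *\<^sub>v (Pd *\<^sub>v (S *\<^sub>v v))) $ i =
      (R3 *\<^sub>v v) $ i - (S3 *\<^sub>v (Pd *\<^sub>v (R *\<^sub>v v))) $ i + (S3 *\<^sub>v (Pd *\<^sub>v (S *\<^sub>v v))) $ i"
      using i Rv w2 by (intro idx3, auto)
    thus "0 \<le> (R3 *\<^sub>v v - S3 *\<^sub>v (Pd *\<^sub>v (R *\<^sub>v v)) + S3 *\<^sub>v (Pd *\<^sub>v (S *\<^sub>v v))) $ i"
      using b1[rule_format, OF i] b2[rule_format, OF i] b3[rule_format, OF i] by linarith
  qed
  have c1: "\<forall>i<n. 0 \<le> (Q *\<^sub>v (R3 *\<^sub>v v)) $ i"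
    using mv_nn[OF car(8) props(12) Rv(3) b3] by blast
  have c2: "\<forall>i<n. (Q *\<^sub>v (S3 *\<^sub>v (Pd *\<^sub>v (R *\<^sub>v v)))) $ i \<le> 0"
    using mv_nn_np[OF car(8) props(12) w2(1) b1] by blast
  have c3: "\<forall>i<n. 0 \<le> (Q *\<^sub>v (S3 *\<^sub>v (Pd *\<^sub>v (S *\<^sub>v v)))) $ i"
    using mv_nn[OF car(8) props(12) w2(2) b2] by blast
  show "\<forall>i<n. 0 \<le> (B *\<^sub>v v) $ i" unfolding Bv[OF v]
  proof (intro allI impI)
    fix i assume i: "i < n"
    have "(Q *\<^sub>v (R3 *\<^sub>v v) - Q *\<^sub>v (S3 *\<^sub>v (Pd *\<^sub>v (R *\<^sub>v v)))) $ i =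
      (Q *\<^sub>v (R3 *\<^sub>v v)) $ i - (Q *\<^sub>v (S3 *\<^sub>v (Pd *\<^sub>v (R *\<^sub>v v)))) $ i"
      using i car(8) Rv w2 by (intro idx2, auto)
    thus "0 \<le> (Q *\<^sub>v (R3 *\<^sub>v v) - Q *\<^sub>v (S3 *\<^sub>v (Pd *\<^sub>v (R *\<^sub>v v)))) $ i"
      using c1[rule_format, OF i] c2[rule_format, OF i] by linarith
  qed
  show "\<forall>i<n. 0 \<le> (C *\<^sub>v v) $ i" unfolding Cv[OF v] using c3 .
qed

lemma nonnegs: "nonneg_mat G" "nonneg_mat B" "nonneg_mat C"
proof -
  show "nonneg_mat G" by (rule nonneg_from_vec[OF car2(1)], rule signs(1))
  show "nonneg_mat B" by (rule nonneg_from_vec[OF car2(2)], rule signs(2))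
  show "nonneg_mat C" by (rule nonneg_from_vec[OF car2(3)], rule signs(3))
qed


lemma null_Ah: "null_mat Ah \<subseteq> null_mat P3"
proof
  fix x assume "x \<in> null_mat Ah"
  hence x: "x \<in> carrier_vec n" "Ah *\<^sub>v x = 0\<^sub>v m" unfolding null_mat_def using car by auto
  have I: "1\<^sub>m m - S3 * Pd \<in> carrier_mat m m" using car by auto
  have Ax: "A *\<^sub>v x \<in> carrier_vec m" using A x by auto
  have SPx: "(S3 * Pd) *\<^sub>v (A *\<^sub>v x) \<in> carrier_vec m" using car2(6) Ax by auto
  have e1: "Ah *\<^sub>v x = A *\<^sub>v x - (S3 * Pd) *\<^sub>v (A *\<^sub>v x)"
    using assoc_mult_mat_vec[OF I A x(1)] mat2[OF _ car2(6) Ax, of "1\<^sub>m m"] Ax by auto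
  have "(S3 * Pd) *\<^sub>v (A *\<^sub>v x) = A *\<^sub>v x"
  proof (rule eq_vecI)
    fix i assume "i < dim_vec (A *\<^sub>v x)"
    hence i: "i < m" using A by auto
    have "(Ah *\<^sub>v x) $ i = 0" using x(2) i by simp
    also have "(Ah *\<^sub>v x) $ i = (A *\<^sub>v x) $ i - ((S3 * Pd) *\<^sub>v (A *\<^sub>v x)) $ i"
      unfolding e1 by (rule idx2[OF Ax SPx i])
    finally show "((S3 * Pd) *\<^sub>v (A *\<^sub>v x)) $ i = (A *\<^sub>v x) $ i" by simp
  qed (insert SPx Ax car A, auto)
  from spec_fix[OF spec car2(6) Ax this] have "A *\<^sub>v x = 0\<^sub>v m" .
  hence "x \<in> null_mat A" unfolding null_mat_def using A x by auto
  thus "x \<in> null_mat P3" using props(10) by simp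
qed

lemma EQ: assumes w: "w \<in> carrier_vec m" shows "Ahd *\<^sub>v (Ah *\<^sub>v (Q *\<^sub>v w)) = Q *\<^sub>v w"
proof -
  define F where "F = Q * P3"
  define E where "E = Ahd * Ah"
  have F: "F \<in> carrier_mat n n" and E: "E \<in> carrier_mat n n" unfolding F_def E_def using car by auto
  have P3E: "P3 *\<^sub>v (Ahd *\<^sub>v (Ah *\<^sub>v v)) = P3 *\<^sub>v v" if v: "v \<in> carrier_vec n" for v
    by (rule null_proj[OF Ahmp car(10) car(4) null_Ah v])
  have FE: "F * E = F"
  proof (rule mat_eq_mv[OF _ F])
    show "F * E \<in> carrier_mat n n" using F E by auto
    fix v :: "real vec" assume v: "v \<in> carrier_vec n"
    have "(F * E) *\<^sub>v v = F *\<^sub>v (E *\<^sub>v v)" by (rule assoc_mult_mat_vec[OF F E v])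
    also have "E *\<^sub>v v = Ahd *\<^sub>v (Ah *\<^sub>v v)" unfolding E_def by (rule assoc_mult_mat_vec[OF car(9) car(10) v])
    also have "F *\<^sub>v (Ahd *\<^sub>v (Ah *\<^sub>v v)) = Q *\<^sub>v (P3 *\<^sub>v (Ahd *\<^sub>v (Ah *\<^sub>v v)))"
      unfolding F_def by (rule assoc_mult_mat_vec[OF car(8) car(4)], insert car v, auto)
    also have "\<dots> = Q *\<^sub>v (P3 *\<^sub>v v)" using P3E[OF v] by simp
    also have "\<dots> = F *\<^sub>v v" unfolding F_def by (rule assoc_mult_mat_vec[OF car(8) car(4) v, symmetric])
    finally show "(F * E) *\<^sub>v v = F *\<^sub>v v" .
  qed
  have FT: "transpose_mat F = F" using props(11) unfolding F_def is_mp_inverse_def by auto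
  have ET: "transpose_mat E = E" using Ahmp unfolding E_def is_mp_inverse_def by auto
  have EF: "E * F = F"
  proof -
    have "F = transpose_mat (F * E)" using FE FT by simp
    also have "\<dots> = transpose_mat E * transpose_mat F" by (rule transpose_mult[OF F E])
    finally show ?thesis using ET FT by simp
  qed
  have Qw: "Q *\<^sub>v w \<in> carrier_vec n" using car w by auto
  have QPQ: "Q *\<^sub>v (P3 *\<^sub>v (Q *\<^sub>v w)) = Q *\<^sub>v w"
  proof -
    have "Q * P3 * Q = Q" using props(11) unfolding is_mp_inverse_def by auto
    hence "(Q * P3 * Q) *\<^sub>v w = Q *\<^sub>v w" by simp
    thus ?thesis using as3g[OF car(8) car(4) car(8) w] by simp
  qed
  have FQ: "F *\<^sub>v (Q *\<^sub>v w) = Q *\<^sub>v w" unfolding F_def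
    using assoc_mult_mat_vec[OF car(8) car(4) Qw] QPQ by simp
  have "Ahd *\<^sub>v (Ah *\<^sub>v (Q *\<^sub>v w)) = E *\<^sub>v (Q *\<^sub>v w)"
    unfolding E_def by (rule assoc_mult_mat_vec[OF car(9) car(10) Qw, symmetric])
  also have "\<dots> = E *\<^sub>v (F *\<^sub>v (Q *\<^sub>v w))" using FQ by simp
  also have "\<dots> = (E * F) *\<^sub>v (Q *\<^sub>v w)" by (rule assoc_mult_mat_vec[OF E F Qw, symmetric])
  also have "\<dots> = Q *\<^sub>v w" using EF FQ by simp
  finally show ?thesis .
qed


lemma rho_lt_1: assumes n: "n > 0" shows "real_spectral_radius (W_mat n B C) < 1"
proof (rule ccontr)
  let ?r = "real_spectral_radius (W_mat n B C)"
  assume "\<not> ?thesis"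
  hence r1: "?r \<ge> 1" by simp
  from W_perron[OF car2(2,3) nonnegs(2,3) n] obtain x y where
    xy: "x \<in> carrier_vec n" "y \<in> carrier_vec n" and xnn: "\<forall>i<n. 0 \<le> x $ i" and ynn: "\<forall>i<n. 0 \<le> y $ i"
    and nz: "x \<noteq> 0\<^sub>v n \<or> y \<noteq> 0\<^sub>v n"
    and s1: "\<forall>i<n. ?r * x $ i \<le> (B *\<^sub>v x + C *\<^sub>v y) $ i"
    and s2: "\<forall>i<n. ?r * y $ i \<le> x $ i" by blast
  have yx: "\<forall>i<n. y $ i \<le> x $ i"
  proof (intro allI impI)
    fix i assume i: "i < n"
    have "(?r - 1) * y $ i \<ge> 0" using r1 ynn i by simp
    hence "y $ i \<le> ?r * y $ i" by (simp add: algebra_simps)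
    thus "y $ i \<le> x $ i" using s2 i by force
  qed
  have Cyx: "\<forall>i<n. (C *\<^sub>v y) $ i \<le> (C *\<^sub>v x) $ i"
    using mv_mono[OF car2(3) nonnegs(3) xy(2) xy(1) yx] by blast
  have Gx: "G *\<^sub>v x \<in> carrier_vec m" using car2(1) xy by auto
  define x' where "x' = Q *\<^sub>v (G *\<^sub>v x)"
  have x': "x' \<in> carrier_vec n" unfolding x'_def using car(8) Gx by auto
  have Bx: "B *\<^sub>v x \<in> carrier_vec n" "C *\<^sub>v x \<in> carrier_vec n" "C *\<^sub>v y \<in> carrier_vec n"
    using car2 xy by auto
  have xx': "\<forall>i<n. x $ i \<le> x' $ i"
  proof (intro allI impI)
    fix i assume i: "i < n"
    have "x' $ i = (B *\<^sub>v x) $ i + (C *\<^sub>v x) $ i" unfolding x'_def BCv[OF xy(1), symmetric]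
      by (rule idxp[OF Bx(1,2) i])
    moreover have "(B *\<^sub>v x + C *\<^sub>v y) $ i = (B *\<^sub>v x) $ i + (C *\<^sub>v y) $ i" by (rule idxp[OF Bx(1,3) i])
    moreover have "x $ i \<le> ?r * x $ i" using r1 xnn i by (simp add: mult_right_mono[of 1 ?r, simplified])
    ultimately show "x $ i \<le> x' $ i" using s1 Cyx i by force
  qed
  have Gx': "G *\<^sub>v x' \<in> carrier_vec m" using car2(1) x' by auto
  have d: "x - x' \<in> carrier_vec n" using xy x' by auto
  have dn: "\<forall>i<n. (x - x') $ i \<le> 0" using xx' idx2[OF xy(1) x'] by simp
  have Ahx': "Ah *\<^sub>v x' = G *\<^sub>v (x - x')"
  proof -
    have "Ah *\<^sub>v x' = P3 *\<^sub>v x' - G *\<^sub>v x'" by (rule Ahv[OF x'])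
    also have "P3 *\<^sub>v x' = G *\<^sub>v x" unfolding x'_def by (rule PQG[OF xy(1)])
    finally show ?thesis using lin2[OF car2(1) xy(1) x'] by simp
  qed
  have Ahn: "\<forall>i<m. (Ah *\<^sub>v x') $ i \<le> 0" unfolding Ahx'
    using mv_nn_np[OF car2(1) nonnegs(1) d dn] by blast
  have Ahx'c: "Ah *\<^sub>v x' \<in> carrier_vec m" using car(10) x' by auto
  have "x' = Ahd *\<^sub>v (Ah *\<^sub>v x')" unfolding x'_def by (rule EQ[OF Gx, symmetric])
  hence x'n: "\<forall>i<n. x' $ i \<le> 0" using mv_nn_np[OF car(9) Ahnn Ahx'c Ahn] by metis
  have x0: "x = 0\<^sub>v n"
  proof (rule eq_vecI)
    fix i assume "i < dim_vec (0\<^sub>v n :: real vec)"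
    hence i: "i < n" by simp
    have "x $ i \<le> x' $ i" "x' $ i \<le> 0" "0 \<le> x $ i" using xx' x'n xnn i by auto
    thus "x $ i = 0\<^sub>v n $ i" using i by simp
  qed (insert xy, auto)
  have y0: "y = 0\<^sub>v n"
  proof (rule eq_vecI)
    fix i assume "i < dim_vec (0\<^sub>v n :: real vec)"
    hence i: "i < n" by simp
    have "x $ i = 0" using x0 i by simp
    thus "y $ i = 0\<^sub>v n $ i" using yx ynn i by force
  qed (insert xy, auto)
  show False using nz x0 y0 by simp
qed


lemma QAh: assumes v: "v \<in> carrier_vec n" and i: "i < n"
  shows "((Q * Ah) *\<^sub>v v) $ i = (Q *\<^sub>v (P3 *\<^sub>v v)) $ i - (B *\<^sub>v v) $ i - (C *\<^sub>v v) $ i"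
proof -
  have c0: "P3 *\<^sub>v v \<in> carrier_vec m" "G *\<^sub>v v \<in> carrier_vec m"
    by (rule mult_mat_vec_carrier[OF car(4) v], rule mult_mat_vec_carrier[OF car2(1) v])
  have c: "P3 *\<^sub>v v \<in> carrier_vec m" "G *\<^sub>v v \<in> carrier_vec m" "B *\<^sub>v v \<in> carrier_vec n"
    "C *\<^sub>v v \<in> carrier_vec n" "Q *\<^sub>v (P3 *\<^sub>v v) \<in> carrier_vec n" "Q *\<^sub>v (G *\<^sub>v v) \<in> carrier_vec n"
    by (rule c0(1), rule c0(2), rule mult_mat_vec_carrier[OF car2(2) v], rule mult_mat_vec_carrier[OF car2(3) v],
      rule mult_mat_vec_carrier[OF car(8) c0(1)], rule mult_mat_vec_carrier[OF car(8) c0(2)])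
  have "(Q * Ah) *\<^sub>v v = Q *\<^sub>v (Ah *\<^sub>v v)" by (rule assoc_mult_mat_vec[OF car(8) car(10) v])
  also have "\<dots> = Q *\<^sub>v (P3 *\<^sub>v v) - Q *\<^sub>v (G *\<^sub>v v)" unfolding Ahv[OF v] by (rule lin2[OF car(8) c(1,2)])
  finally have e: "(Q * Ah) *\<^sub>v v = Q *\<^sub>v (P3 *\<^sub>v v) - Q *\<^sub>v (G *\<^sub>v v)" .
  have e1: "((Q * Ah) *\<^sub>v v) $ i = (Q *\<^sub>v (P3 *\<^sub>v v)) $ i - (Q *\<^sub>v (G *\<^sub>v v)) $ i"
    unfolding e by (rule idx2[OF c(5,6) i])
  have e2: "(Q *\<^sub>v (G *\<^sub>v v)) $ i = (B *\<^sub>v v) $ i + (C *\<^sub>v v) $ i"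
    unfolding BCv[OF v, symmetric] by (rule idxp[OF c(3,4) i])
  show ?thesis using e1 e2 by linarith
qed

lemma QR: assumes v: "v \<in> carrier_vec n"
  shows "(Q * (R3 - S3 * Pd * R)) *\<^sub>v v = B *\<^sub>v v"
proof -
  have c: "R3 - S3 * Pd * R \<in> carrier_mat m n" using car by auto
  have "(Q * (R3 - S3 * Pd * R)) *\<^sub>v v = Q *\<^sub>v ((R3 - S3 * Pd * R) *\<^sub>v v)" by (rule assoc_mult_mat_vec[OF car(8) c v])
  also have "(R3 - S3 * Pd * R) *\<^sub>v v = R3 *\<^sub>v v - S3 *\<^sub>v (Pd *\<^sub>v (R *\<^sub>v v))"
    unfolding mat2[OF car(5) car2(4) v] as3[OF car(6) v car(2)] ..
  also have "Q *\<^sub>v \<dots> = Q *\<^sub>v (R3 *\<^sub>v v) - Q *\<^sub>v (S3 *\<^sub>v (Pd *\<^sub>v (R *\<^sub>v v)))"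
    by (rule lin2[OF car(8)], insert car v, auto)
  finally show ?thesis unfolding Bv[OF v] .
qed

end



theorem theorem3p11:
  fixes m n :: nat
    and A Ad P1 R1 S1 P1d P2 R2 S2 P2d P3 R3 S3 P3d Ah1d Ah2d :: "real mat"
  assumes dims: "A \<in> carrier_mat m n" "m > 0" "n > 0"
    and semimono: "is_mp_inverse A Ad" "nonneg_mat Ad"
    and spl1: "double_proper_weak_regular A P1 R1 S1 P1d"
    and spl2: "double_proper_weak_regular A P2 R2 S2 P2d"
    and spl3: "double_proper_regular A P3 R3 S3 P3d"
    and nullS3: "null_mat P3 \<subseteq> null_mat S3"
    and rangeS3: "range_mat S3 \<subseteq> range_mat P3"
    and spec1: "1 \<notin> real_spectrum (S3 * P1d)"
    and spec2: "1 \<notin> real_spectrum (S3 * P2d)"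
    and Ah1: "is_mp_inverse ((1\<^sub>m m - S3 * P1d) * A) Ah1d" "nonneg_mat Ah1d"
    and Ah2: "is_mp_inverse ((1\<^sub>m m - S3 * P2d) * A) Ah2d" "nonneg_mat Ah2d"
    and cmpA: "mat_le (P3d * ((1\<^sub>m m - S3 * P2d) * A)) (P3d * ((1\<^sub>m m - S3 * P1d) * A))"
    and cmpR: "mat_le (P3d * (R3 - S3 * P2d * R2)) (P3d * (R3 - S3 * P1d * R1))"
  shows "real_spectral_radius (W_mat n (P3d * R3 - P3d * S3 * P1d * R1) (P3d * S3 * P1d * S1))
           \<le> real_spectral_radius (W_mat n (P3d * R3 - P3d * S3 * P2d * R2) (P3d * S3 * P2d * S2))
       \<and> real_spectral_radius (W_mat n (P3d * R3 - P3d * S3 * P2d * R2) (P3d * S3 * P2d * S2)) < 1"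
proof -
  have n: "n > 0" using dims by simp
  interpret s1: splitctx m n A P1 R1 S1 P1d P3 R3 S3 P3d Ah1d
    by (unfold_locales, insert dims spl1 spl3 nullS3 rangeS3 spec1 Ah1, auto)
  interpret s2: splitctx m n A P2 R2 S2 P2d P3 R3 S3 P3d Ah2d
    by (unfold_locales, insert dims spl2 spl3 nullS3 rangeS3 spec2 Ah2, auto)
  let ?B1 = "P3d * R3 - P3d * S3 * P1d * R1"
  let ?C1 = "P3d * S3 * P1d * S1"
  let ?B2 = "P3d * R3 - P3d * S3 * P2d * R2"
  let ?C2 = "P3d * S3 * P2d * S2"
  let ?r1 = "real_spectral_radius (W_mat n ?B1 ?C1)"
  let ?r2 = "real_spectral_radius (W_mat n ?B2 ?C2)"
  have r1: "?r1 < 1" by (rule s1.rho_lt_1[OF n])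
  have r2: "?r2 < 1" by (rule s2.rho_lt_1[OF n])
  have W2: "W_mat n ?B2 ?C2 \<in> carrier_mat (n+n) (n+n)" by (rule W_carrier[OF s2.car2(2,3)])
  have W2nn: "nonneg_mat (W_mat n ?B2 ?C2)" by (rule W_nonneg[OF s2.car2(2,3) s2.nonnegs(2,3)])
  have r2nn: "0 \<le> ?r2" by (rule rsr_nonneg[OF W2], insert n, simp)
  have "?r1 \<le> ?r2"
  proof (cases "?r1 \<le> 0")
    case True thus ?thesis using r2nn by linarith
  next
    case False
    hence rp: "?r1 > 0" by simp
    from W_perron[OF s1.car2(2,3) s1.nonnegs(2,3) n] obtain x y where
      xy: "x \<in> carrier_vec n" "y \<in> carrier_vec n" and xnn: "\<forall>i<n. 0 \<le> x $ i" and ynn: "\<forall>i<n. 0 \<le> y $ i"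
      and nz: "x \<noteq> 0\<^sub>v n \<or> y \<noteq> 0\<^sub>v n"
      and s1: "\<forall>i<n. ?r1 * x $ i \<le> (?B1 *\<^sub>v x + ?C1 *\<^sub>v y) $ i"
      and s2: "\<forall>i<n. ?r1 * y $ i \<le> x $ i" by blast
    define x2 where "x2 = (1 / ?r1) \<cdot>\<^sub>v x"
    have x2: "x2 \<in> carrier_vec n" unfolding x2_def using xy by auto
    have x2i: "x2 $ i = x $ i / ?r1" if "i < n" for i using that xy unfolding x2_def by auto
    have yx2: "\<forall>j<n. y $ j \<le> x2 $ j"
    proof (intro allI impI)
      fix j assume j: "j < n"
      show "y $ j \<le> x2 $ j" unfolding x2i[OF j] using s2 j rp by (simp add: le_divide_eq mult.commute)
    qed
    have xnz: "x \<noteq> 0\<^sub>v n"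
    proof
      assume x0: "x = 0\<^sub>v n"
      have "y = 0\<^sub>v n"
      proof (rule eq_vecI)
        fix i assume "i < dim_vec (0\<^sub>v n :: real vec)"
        hence i: "i < n" by simp
        have "?r1 * y $ i \<le> 0" using s2 i x0 by auto
        hence "y $ i \<le> 0" using rp by (simp add: mult_le_0_iff)
        thus "y $ i = 0\<^sub>v n $ i" using ynn i by force
      qed (insert xy, auto)
      thus False using nz x0 by simp
    qed
    define z where "z = x @\<^sub>v x2"
    have z: "z \<in> carrier_vec (n+n)" unfolding z_def using xy x2 by auto
    have znn: "\<forall>i<n+n. 0 \<le> z $ i"
    proof (intro allI impI)
      fix i assume i: "i < n + n"
      show "0 \<le> z $ i"
      proof (cases "i < n")
        case True thus ?thesis unfolding z_def using xy xnn by auto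
      next
        case False
        hence "i - n < n" using i by simp
        moreover have "z $ i = x2 $ (i - n)" unfolding z_def using False xy x2 i by auto
        ultimately show ?thesis using x2i[of "i - n"] xnn rp by auto
      qed
    qed
    have znz: "z \<noteq> 0\<^sub>v (n+n)"
    proof
      assume "z = 0\<^sub>v (n+n)"
      hence "\<forall>i<n. x $ i = 0" unfolding z_def using xy
        by (metis add_diff_cancel_left' index_append_vec(1) index_zero_vec(1) carrier_vecD trans_less_add1)
      hence "x = 0\<^sub>v n" using xy by (intro eq_vecI, auto)
      thus False using xnz by simp
    qed
    have Wz: "W_mat n ?B2 ?C2 *\<^sub>v z = (?B2 *\<^sub>v x + ?C2 *\<^sub>v x2) @\<^sub>v x"
      unfolding z_def by (rule W_mult2[OF s2.car2(2,3) xy(1) x2])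
    have cB: "?B1 *\<^sub>v x \<in> carrier_vec n" "?B2 *\<^sub>v x \<in> carrier_vec n" "?C1 *\<^sub>v x \<in> carrier_vec n"
      "?C2 *\<^sub>v x \<in> carrier_vec n" "?C1 *\<^sub>v y \<in> carrier_vec n" "?C2 *\<^sub>v x2 \<in> carrier_vec n"
      "?C1 *\<^sub>v x2 \<in> carrier_vec n"
      using s1.car2(2,3) s2.car2(2,3) xy x2 by auto
    have sub: "\<forall>i<n+n. ?r1 * z $ i \<le> (W_mat n ?B2 ?C2 *\<^sub>v z) $ i"
    proof (intro allI impI)
      fix i assume i: "i < n + n"
      show "?r1 * z $ i \<le> (W_mat n ?B2 ?C2 *\<^sub>v z) $ i"
      proof (cases "i < n")
        case True
        have zi: "z $ i = x $ i" unfolding z_def using True xy by auto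
        have Wi: "(W_mat n ?B2 ?C2 *\<^sub>v z) $ i = (?B2 *\<^sub>v x) $ i + (?C2 *\<^sub>v x2) $ i"
        proof -
          have dd: "dim_vec (?B2 *\<^sub>v x + ?C2 *\<^sub>v x2) = n" "dim_vec x = n" using cB(2,6) xy s2.car by auto
          show ?thesis unfolding Wz using True dd idxp[OF cB(2,6) True] by simp
        qed
        have C2x2: "(?C2 *\<^sub>v x2) $ i = (?C2 *\<^sub>v x) $ i / ?r1"
          unfolding x2_def mult_mat_vec[OF s2.car2(3) xy(1)] using True cB s2.car by auto
        have C1x2: "(?C1 *\<^sub>v x2) $ i = (?C1 *\<^sub>v x) $ i / ?r1"
          unfolding x2_def mult_mat_vec[OF s1.car2(3) xy(1)] using True cB s1.car by auto
        have "(?C1 *\<^sub>v y) $ i \<le> (?C1 *\<^sub>v x2) $ i"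
          by (rule mv_mono[OF s1.car2(3) s1.nonnegs(3) xy(2) x2 yx2 True])
        moreover have "?r1 * x $ i \<le> (?B1 *\<^sub>v x) $ i + (?C1 *\<^sub>v y) $ i"
          using s1[rule_format, OF True] idxp[OF cB(1,5) True] by simp
        ultimately have h1: "?r1 * x $ i \<le> (?B1 *\<^sub>v x) $ i + (?C1 *\<^sub>v x) $ i / ?r1"
          using C1x2 by linarith
        have h2: "(?B2 *\<^sub>v x) $ i \<le> (?B1 *\<^sub>v x) $ i"
        proof -
          have c: "P3d * (R3 - S3 * P2d * R2) \<in> carrier_mat n n" using s2.car by auto
          from mat_le_mv[OF cmpR c xy(1) xnn True]
          show ?thesis unfolding s1.QR[OF xy(1)] s2.QR[OF xy(1)] .
        qed
        have h3: "(?B1 *\<^sub>v x) $ i + (?C1 *\<^sub>v x) $ i \<le> (?B2 *\<^sub>v x) $ i + (?C2 *\<^sub>v x) $ i"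
        proof -
          have "((P3d * ((1\<^sub>m m - S3 * P2d) * A)) *\<^sub>v x) $ i \<le> ((P3d * ((1\<^sub>m m - S3 * P1d) * A)) *\<^sub>v x) $ i"
            by (rule mat_le_mv[OF cmpA _ xy(1) xnn True], insert s2.car, auto)
          thus ?thesis unfolding s1.QAh[OF xy(1) True] s2.QAh[OF xy(1) True] by linarith
        qed
        have "?r1 * x $ i \<le> (?B2 *\<^sub>v x) $ i + (?C2 *\<^sub>v x) $ i / ?r1"
          by (rule arith_cmp[OF rp _ h2 h3 h1], insert r1, simp)
        thus ?thesis unfolding zi Wi C2x2 .
      next
        case False
        hence j: "i - n < n" using i by simp
        have zi: "z $ i = x2 $ (i - n)" unfolding z_def using False xy x2 i by auto
        have Wi: "(W_mat n ?B2 ?C2 *\<^sub>v z) $ i = x $ (i - n)"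
        proof -
          have dd: "dim_vec (?B2 *\<^sub>v x + ?C2 *\<^sub>v x2) = n" "dim_vec x = n" using cB(2,6) xy s2.car by auto
          show ?thesis unfolding Wz using False i dd by simp
        qed
        show ?thesis unfolding zi Wi x2i[OF j] using rp by simp
      qed
    qed
    show ?thesis by (rule lower_bound[OF W2 W2nn z znn znz rp sub])
  qed
  thus ?thesis using r2 by simp
qed



end
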